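(* Let $f=f(u,v)$ be a generalized timelike minimal surface with real Weierstrass data $(g_1,g_2,\hat{\omega}_1du,\hat{\omega}_2dv)$. Then: (i) a point $p$ satisfies $df_p=\mathbf{0}$ if and only if $\hat{\omega}_1(p)=\hat{\omega}_2(p)=0$; (ii) if $p$ is a singular point with $df_p=\mathbf 0$, then $f$ is a front at $p$ if and only if $g_1g_2(p)\neq1$ and $(g_1)_u(g_2)_v(p)\neq0$.
   Context: $\mathbb{L}^3$ is $\mathbb{R}^3$ with the Lorentzian metric $-dt^2+dx^2+dy^2$. A generalized timelike minimal surface is a non-constant smooth map $f\colon\Sigma\to\mathbb{L}^3$ from a 2-manifold which is an immersion on an open dense subset and such that near each point there are local coordinates $(u,v)$ with $\langle f_u,f_u\rangle=\langle f_v,f_v\rangle=0$ and $f_{uv}=0$. In such coordinates $f(u,v)=\tfrac12\int_{u_0}^u(-1-g_1^2,1-g_1^2,2g_1)\hat{\omega}_1du+\tfrac12\int_{v_0}^v(1+g_2^2,1-g_2^2,-2g_2)\hat{\omega}_2dv+f(u_0,v_0)$, with $g_1,\hat\omega_1$ functions of $u$ and $g_2,\hat\omega_2$ functions of $v$ (real Weierstrass data). Standing assumption: $g_1,g_2$ take finite real values at every singular point (point where $f$ is not an immersion). Such $f$ is a frontal with unit normal $n=(g_1+g_2,-g_1+g_2,1+g_1g_2)/\sqrt{(1-g_1g_2)^2+2(g_1+g_2)^2}$ (Euclidean-orthogonal to $df$); $f$ is a front at $p$ if $(f,n)$ is an immersion at $p$. *)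

theory Defs
  imports "HOL-Analysis.Analysis"
begin

definition smooth_real_on :: "real set \<Rightarrow> (real \<Rightarrow> real) \<Rightarrow> bool" where
  "smooth_real_on S g \<longleftrightarrow> (\<forall>k. \<forall>x\<in>S. ((deriv ^^ k) g) differentiable (at x))"

definition fu_vec :: "real \<Rightarrow> real \<Rightarrow> real^3" where
  "fu_vec g w = (w / 2) *\<^sub>R vector [-1 - g^2, 1 - g^2, 2 * g]"

definition fv_vec :: "real \<Rightarrow> real \<Rightarrow> real^3" where
  "fv_vec g w = (w / 2) *\<^sub>R vector [1 + g^2, 1 - g^2, - 2 * g]"

definition normal_vec :: "real \<Rightarrow> real \<Rightarrow> real^3" where
  "normal_vec g1 g2 = (1 / sqrt ((1 - g1 * g2)^2 + 2 * (g1 + g2)^2)) *\<^sub>R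
      vector [g1 + g2, - g1 + g2, 1 + g1 * g2]"

definition immersion_at :: "('a::real_normed_vector \<Rightarrow> 'b::real_normed_vector) \<Rightarrow> 'a \<Rightarrow> bool" where
  "immersion_at F p \<longleftrightarrow> (\<exists>D. (F has_derivative D) (at p) \<and> inj D)"

definition front_at :: "('a::real_normed_vector \<Rightarrow> real^3) \<Rightarrow> ('a \<Rightarrow> real^3) \<Rightarrow> 'a \<Rightarrow> bool" where
  "front_at f n p \<longleftrightarrow> immersion_at (\<lambda>q. (f q, n q)) p"

text \<open>A generalized timelike minimal surface, in null coordinates (u,v) ranging over
  the open rectangle I x J, with real Weierstrass data (g1, w1 du, g2, w2 dv):
  f is given (up to a constant) by the Weierstrass integral formula, which is expressed
  by prescribing its differential; f is an immersion on an open dense subset.\<close>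
definition gen_timelike_minimal ::
  "real set \<Rightarrow> real set \<Rightarrow> (real \<Rightarrow> real) \<Rightarrow> (real \<Rightarrow> real) \<Rightarrow> (real \<Rightarrow> real) \<Rightarrow> (real \<Rightarrow> real)
   \<Rightarrow> (real \<times> real \<Rightarrow> real^3) \<Rightarrow> bool" where
  "gen_timelike_minimal I J g1 w1 g2 w2 f \<longleftrightarrow>
     open I \<and> is_interval I \<and> I \<noteq> {} \<and> open J \<and> is_interval J \<and> J \<noteq> {} \<and>
     smooth_real_on I g1 \<and> smooth_real_on I w1 \<and> smooth_real_on J g2 \<and> smooth_real_on J w2 \<and>
     (\<forall>u\<in>I. \<forall>v\<in>J. (f has_derivative
         (\<lambda>(a, b). a *\<^sub>R fu_vec (g1 u) (w1 u) + b *\<^sub>R fv_vec (g2 v) (w2 v))) (at (u, v))) \<and>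
     (\<exists>u\<in>I. \<exists>v\<in>J. \<exists>u'\<in>I. \<exists>v'\<in>J. f (u, v) \<noteq> f (u', v')) \<and>
     (\<exists>W. open W \<and> W \<subseteq> I \<times> J \<and> I \<times> J \<subseteq> closure W \<and> (\<forall>q\<in>W. immersion_at f q))"

end

theory Submission
  imports Defs
begin

definition "ee1 = (vector [1,0,0] :: real^3)"
definition "ee2 = (vector [0,1,0] :: real^3)"
definition "ee3 = (vector [0,0,1] :: real^3)"
lemma vec3_decomp: "vector [x, y, z] = x *\<^sub>R ee1 + y *\<^sub>R ee2 + z *\<^sub>R ee3"
  by (simp add: vec_eq_iff forall_3 ee1_def ee2_def ee3_def)

lemma ee_comps[simp]: "ee1 $ 1 = 1" "ee1 $ 2 = 0" "ee1 $ 3 = 0" "ee2 $ 1 = 0" "ee2 $ 2 = 1" "ee2 $ 3 = 0"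
  "ee3 $ 1 = 0" "ee3 $ 2 = 0" "ee3 $ 3 = 1"
  by (simp_all add: ee1_def ee2_def ee3_def)

lemma Dpos: "(1 - a * b)^2 + 2 * (a + b)^2 > (0::real)"
proof -
  have "(1 - a * b)^2 + 2 * (a + b)^2 \<noteq> 0"
  proof
    assume h: "(1 - a * b)^2 + 2 * (a + b)^2 = 0"
    have "(1 - a*b)^2 \<ge> 0" "(a+b)^2 \<ge> 0" by simp_all
    with h have "(1 - a*b)^2 = 0" "(a + b)^2 = 0" by linarith+
    hence "1 - a*b = 0" "a + b = 0" by simp_all
    hence "b = -a" "a*b = 1" by auto
    hence "- (a*a) = 1" by simp
    moreover have "a*a \<ge> 0" by simp
    ultimately show False by linarith
  qed
  moreover have "(1 - a*b)^2 \<ge> 0" "(a+b)^2 \<ge> 0" by simp_all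
  ultimately show ?thesis by linarith
qed

lemma normal_deriv:
  fixes G1 G2 :: "real \<times> real \<Rightarrow> real"
  assumes d1: "(G1 has_derivative (\<lambda>h. fst h * p)) (at z)"
    and d2: "(G2 has_derivative (\<lambda>h. snd h * q)) (at z)"
  shows "((\<lambda>w. normal_vec (G1 w) (G2 w)) has_derivative (\<lambda>h.
     (1 / sqrt ((1 - G1 z * G2 z)^2 + 2 * (G1 z + G2 z)^2)) *\<^sub>R
       vector [fst h*p + snd h*q, snd h*q - fst h*p, G2 z*(fst h*p) + G1 z*(snd h*q)]
   + (- ((fst h*p) * (-2*G2 z*(1-G1 z*G2 z)+4*(G1 z+G2 z)) + (snd h*q) * (-2*G1 z*(1-G1 z*G2 z)+4*(G1 z+G2 z)))
       / (2 * ((1 - G1 z * G2 z)^2 + 2 * (G1 z + G2 z)^2) * sqrt ((1 - G1 z * G2 z)^2 + 2 * (G1 z + G2 z)^2))) *\<^sub>R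
       vector [G1 z + G2 z, - G1 z + G2 z, 1 + G1 z * G2 z])) (at z)"
proof -
  define a where "a = G1 z"
  define b where "b = G2 z"
  define D0 where "D0 = (1 - a * b)^2 + 2 * (a + b)^2"
  have D0: "D0 > 0" unfolding D0_def by (rule Dpos)
  have dD: "((\<lambda>w. (1 - G1 w * G2 w)^2 + 2 * (G1 w + G2 w)^2) has_derivative
      (\<lambda>h. (fst h*p) * (-2*b*(1-a*b)+4*(a+b)) + (snd h*q) * (-2*a*(1-a*b)+4*(a+b)))) (at z)"
    unfolding a_def b_def
    apply (rule has_derivative_eq_rhs)
     apply (rule derivative_eq_intros d1 d2 refl)+
    apply (rule ext)
    apply (simp add: algebra_simps power2_eq_square)
    done
  have dsq: "((\<lambda>x. 1 / sqrt x) has_real_derivative (- 1 / (2 * D0 * sqrt D0))) (at D0)"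
  proof -
    have "((\<lambda>x. inverse (sqrt x)) has_real_derivative (- ((inverse (sqrt D0) / 2) * inverse ((sqrt D0)^Suc (Suc 0))))) (at D0)"
      by (rule DERIV_inverse_fun[OF DERIV_real_sqrt[OF D0]]) (use D0 in simp)
    moreover have "- ((inverse (sqrt D0) / 2) * inverse ((sqrt D0)^Suc (Suc 0))) = - 1 / (2 * D0 * sqrt D0)"
      using D0 by (simp add: field_simps)
    ultimately show ?thesis by (metis (no_types, lifting) inverse_eq_divide ext)
  qed
  have dc: "((\<lambda>w. 1 / sqrt ((1 - G1 w * G2 w)^2 + 2 * (G1 w + G2 w)^2)) has_derivative
      (\<lambda>h. (- 1 / (2 * D0 * sqrt D0)) * ((fst h*p) * (-2*b*(1-a*b)+4*(a+b)) + (snd h*q) * (-2*a*(1-a*b)+4*(a+b))))) (at z)"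
    using has_derivative_compose[OF dD dsq[unfolded has_field_derivative_def D0_def a_def b_def]] unfolding D0_def a_def b_def by simp
  have dP: "((\<lambda>w. (G1 w + G2 w) *\<^sub>R ee1 + (- G1 w + G2 w) *\<^sub>R ee2 + (1 + G1 w * G2 w) *\<^sub>R ee3) has_derivative
      (\<lambda>h. (fst h*p + snd h*q) *\<^sub>R ee1 + (snd h*q - fst h*p) *\<^sub>R ee2 + (b*(fst h*p) + a*(snd h*q)) *\<^sub>R ee3)) (at z)"
    unfolding a_def b_def
    by (rule derivative_eq_intros d1 d2 refl | simp)+ (simp add: algebra_simps)
  show ?thesis
    unfolding normal_vec_def vec3_decomp
    apply (rule has_derivative_eq_rhs[OF has_derivative_scaleR[OF dc dP]])
    unfolding a_def[symmetric] b_def[symmetric] D0_def[symmetric]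
    apply (rule ext)
    apply (simp add: vec_eq_iff forall_3)
    using D0 by (simp add: field_simps)
qed
lemma lin3:
  fixes c m x y a b :: real
  assumes c: "c \<noteq> 0" and e1: "c*(x+y)+m*(a+b)=0" and e2: "c*(y-x)+m*(-a+b)=0"
    and e3: "c*(b*x+a*y)+m*(1+a*b)=0" and ab: "a*b \<noteq> 1"
  shows "x = 0 \<and> y = 0"
proof -
  have cy: "c*y = -m*b" using e1 e2 by (simp add: algebra_simps)
  have cx: "c*x = -m*a" using e1 e2 by (simp add: algebra_simps)
  have "c*(b*x+a*y) = b*(c*x) + a*(c*y)" by (simp add: algebra_simps)
  also have "\<dots> = -2*m*a*b" using cx cy by (simp add: algebra_simps)
  finally have "m*(1-a*b) = 0" using e3 by (simp add: algebra_simps)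
  hence "m = 0" using ab by simp
  thus ?thesis using cx cy c by simp
qed

lemma alg_inj:
  fixes a b p q :: real
  defines "D0 \<equiv> (1 - a*b)^2 + 2*(a+b)^2"
  defines "dn \<equiv> \<lambda>h::real\<times>real. (1/sqrt D0) *\<^sub>R vector [fst h*p + snd h*q, snd h*q - fst h*p, b*(fst h*p) + a*(snd h*q)]
     + (-((fst h*p)*(-2*b*(1-a*b)+4*(a+b)) + (snd h*q)*(-2*a*(1-a*b)+4*(a+b))) / (2*D0 * sqrt D0)) *\<^sub>R (vector [a+b, -a+b, 1+a*b] :: real^3)"
  shows "(\<forall>h. dn h = 0 \<longrightarrow> h = 0) \<longleftrightarrow> a*b \<noteq> 1 \<and> p*q \<noteq> 0"
proof -
  have D0: "D0 > 0" unfolding D0_def by (rule Dpos)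
  define s where "s = sqrt D0"
  have s: "s > 0" "s * s = D0" using D0 unfolding s_def by (simp_all add: real_sqrt_mult_self)
  define M where "M = (\<lambda>x y. (-(x*(-2*b*(1-a*b)+4*(a+b)) + y*(-2*a*(1-a*b)+4*(a+b))) / (2*D0 * s)))"
  have comp: "dn h = 0 \<longleftrightarrow>
     (1/s)*((fst h*p) + (snd h*q)) + M (fst h*p) (snd h*q) * (a+b) = 0 \<and>
     (1/s)*((snd h*q) - (fst h*p)) + M (fst h*p) (snd h*q) * (-a+b) = 0 \<and>
     (1/s)*(b*(fst h*p) + a*(snd h*q)) + M (fst h*p) (snd h*q) * (1+a*b) = 0" for h
    unfolding dn_def M_def s_def vec_eq_iff forall_3 by simp
  show ?thesis
  proof
    assume H: "\<forall>h. dn h = 0 \<longrightarrow> h = 0"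
    have p: "p \<noteq> 0"
    proof
      assume "p = 0"
      hence "dn (1,0) = 0" unfolding comp M_def by simp
      hence "((1::real),(0::real)) = 0" using H by blast
      thus False by (simp add: zero_prod_def)
    qed
    have q: "q \<noteq> 0"
    proof
      assume "q = 0"
      hence "dn (0,1) = 0" unfolding comp M_def by simp
      hence "((0::real),(1::real)) = 0" using H by blast
      thus False by (simp add: zero_prod_def)
    qed
    have ab: "a*b \<noteq> 1"
    proof
      assume ab: "a*b = 1"
      hence a0: "a \<noteq> 0" by auto
      have D0e: "D0 = 2*(a+b)^2" unfolding D0_def using ab by simp
      hence apb: "(a+b) \<noteq> 0" using D0 by auto
      have "M a b = - 1 / s"
      proof -
        have "M a b = -(4*(a+b)^2) / (2*D0 * s)" unfolding M_def using ab by (simp add: algebra_simps power2_eq_square)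
        also have "\<dots> = - 1 / s" unfolding D0e using apb s by (simp add: field_simps)
        finally show ?thesis .
      qed
      hence "dn (a/p, b/q) = 0" unfolding comp using p q ab s by (simp add: field_simps)
      hence "(a/p, b/q) = 0" using H by blast
      thus False using a0 p by (simp add: zero_prod_def)
    qed
    show "a*b \<noteq> 1 \<and> p*q \<noteq> 0" using p q ab by simp
  next
    assume A: "a*b \<noteq> 1 \<and> p*q \<noteq> 0"
    show "\<forall>h. dn h = 0 \<longrightarrow> h = 0"
    proof (intro allI impI)
      fix h :: "real \<times> real"
      assume "dn h = 0"
      hence E: "(1/s)*((fst h*p) + (snd h*q)) + M (fst h*p) (snd h*q) * (a+b) = 0"
     "(1/s)*((snd h*q) - (fst h*p)) + M (fst h*p) (snd h*q) * (-a+b) = 0"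
     "(1/s)*(b*(fst h*p) + a*(snd h*q)) + M (fst h*p) (snd h*q) * (1+a*b) = 0"
        unfolding comp by blast+
      have "fst h * p = 0 \<and> snd h * q = 0"
        by (rule lin3[OF _ E]) (use A s in auto)
      thus "h = 0" using A by (simp add: prod_eq_iff zero_prod_def)
    qed
  qed
qed

theorem lemma4p10:
  fixes I J :: "real set" and g1 w1 g2 w2 :: "real \<Rightarrow> real"
    and f :: "real \<times> real \<Rightarrow> real^3" and u v :: real
  assumes "gen_timelike_minimal I J g1 w1 g2 w2 f"
    and "u \<in> I" and "v \<in> J"
  shows "((f has_derivative (\<lambda>_. 0)) (at (u, v)) \<longleftrightarrow> w1 u = 0 \<and> w2 v = 0)
    \<and> (\<not> immersion_at f (u, v) \<and> (f has_derivative (\<lambda>_. 0)) (at (u, v)) \<longrightarrow>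
         (front_at f (\<lambda>q. normal_vec (g1 (fst q)) (g2 (snd q))) (u, v)
            \<longleftrightarrow> g1 u * g2 v \<noteq> 1 \<and> deriv g1 u * deriv g2 v \<noteq> 0))"
proof -
  note G = assms(1)[unfolded gen_timelike_minimal_def]
  define FU where "FU = fu_vec (g1 u) (w1 u)"
  define FV where "FV = fv_vec (g2 v) (w2 v)"
  have Df: "(f has_derivative (\<lambda>(x, y). x *\<^sub>R FU + y *\<^sub>R FV)) (at (u, v))"
    using G assms(2,3) unfolding FU_def FV_def by blast
  have FU0: "FU = 0 \<longleftrightarrow> w1 u = 0"
  proof
    assume "FU = 0"
    hence "FU $ 1 = 0" by simp
    hence "w1 u / 2 * (-1 - (g1 u)^2) = 0" unfolding FU_def fu_vec_def by simp
    moreover have "-1 - (g1 u)^2 \<noteq> 0" by (smt (verit) zero_le_power2)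
    ultimately show "w1 u = 0" by simp
  qed (simp add: FU_def fu_vec_def)
  have FV0: "FV = 0 \<longleftrightarrow> w2 v = 0"
  proof
    assume "FV = 0"
    hence "FV $ 1 = 0" by simp
    hence "w2 v / 2 * (1 + (g2 v)^2) = 0" unfolding FV_def fv_vec_def by simp
    moreover have "1 + (g2 v)^2 \<noteq> 0" by (smt (verit) zero_le_power2)
    ultimately show "w2 v = 0" by simp
  qed (simp add: FV_def fv_vec_def)
  have part1: "(f has_derivative (\<lambda>_. 0)) (at (u, v)) \<longleftrightarrow> w1 u = 0 \<and> w2 v = 0"
  proof
    assume "(f has_derivative (\<lambda>_. 0)) (at (u, v))"
    hence eq: "(\<lambda>(x, y). x *\<^sub>R FU + y *\<^sub>R FV) = (\<lambda>_. 0)"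
      using has_derivative_unique Df by blast
    have "FU = 0" using fun_cong[OF eq, of "(1,0)"] by simp
    moreover have "FV = 0" using fun_cong[OF eq, of "(0,1)"] by simp
    ultimately show "w1 u = 0 \<and> w2 v = 0" using FU0 FV0 by simp
  next
    assume "w1 u = 0 \<and> w2 v = 0"
    hence "FU = 0" "FV = 0" using FU0 FV0 by simp_all
    hence "(\<lambda>(x, y). x *\<^sub>R FU + y *\<^sub>R FV) = (\<lambda>_. 0)" by auto
    thus "(f has_derivative (\<lambda>_. 0)) (at (u, v))" using Df by simp
  qed
  have part2: "front_at f (\<lambda>q. normal_vec (g1 (fst q)) (g2 (snd q))) (u, v)
            \<longleftrightarrow> g1 u * g2 v \<noteq> 1 \<and> deriv g1 u * deriv g2 v \<noteq> 0"
    if f0: "(f has_derivative (\<lambda>_. 0)) (at (u, v))"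
  proof -
    define p where "p = deriv g1 u"
    define q where "q = deriv g2 v"
    have "((deriv ^^ 0) g1) differentiable (at u)" using G assms(2) unfolding smooth_real_on_def by blast
    hence dg1: "(g1 has_real_derivative p) (at u)" unfolding p_def
      by (simp add: DERIV_deriv_iff_real_differentiable)
    have "((deriv ^^ 0) g2) differentiable (at v)" using G assms(3) unfolding smooth_real_on_def by blast
    hence dg2: "(g2 has_real_derivative q) (at v)" unfolding q_def
      by (simp add: DERIV_deriv_iff_real_differentiable)
    have "(fst has_derivative fst) (at (u,v))" by (rule has_derivative_fst[OF has_derivative_ident])
    from has_derivative_compose[OF this, of g1 "\<lambda>x. p * x"]
    have G1d: "((\<lambda>z. g1 (fst z)) has_derivative (\<lambda>h. fst h * p)) (at (u,v))"
      using dg1 by (simp add: has_field_derivative_def mult.commute[of _ p])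
    have "(snd has_derivative snd) (at (u,v))" by (rule has_derivative_snd[OF has_derivative_ident])
    from has_derivative_compose[OF this, of g2 "\<lambda>x. q * x"]
    have G2d: "((\<lambda>z. g2 (snd z)) has_derivative (\<lambda>h. snd h * q)) (at (u,v))"
      using dg2 by (simp add: has_field_derivative_def mult.commute[of _ q])
    define a where "a = g1 u"
    define b where "b = g2 v"
    define D0 where "D0 = (1 - a*b)^2 + 2*(a+b)^2"
    define dn where "dn = (\<lambda>h::real\<times>real. (1/sqrt D0) *\<^sub>R vector [fst h*p + snd h*q, snd h*q - fst h*p, b*(fst h*p) + a*(snd h*q)]
     + (-((fst h*p)*(-2*b*(1-a*b)+4*(a+b)) + (snd h*q)*(-2*a*(1-a*b)+4*(a+b))) / (2*D0 * sqrt D0)) *\<^sub>R (vector [a+b, -a+b, 1+a*b] :: real^3))"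
    have nd: "((\<lambda>z. normal_vec (g1 (fst z)) (g2 (snd z))) has_derivative dn) (at (u,v))"
      using normal_deriv[OF G1d G2d] unfolding dn_def D0_def a_def b_def by simp
    have Fd: "((\<lambda>z. (f z, normal_vec (g1 (fst z)) (g2 (snd z)))) has_derivative (\<lambda>h. (0, dn h))) (at (u,v))"
      using has_derivative_Pair[OF f0 nd] .
    have lin: "linear dn" using nd has_derivative_bounded_linear bounded_linear.linear by blast
    have "front_at f (\<lambda>q. normal_vec (g1 (fst q)) (g2 (snd q))) (u, v) \<longleftrightarrow> inj (\<lambda>h. (0::real^3, dn h))"
      unfolding front_at_def immersion_at_def using Fd has_derivative_unique by blast
    also have "\<dots> \<longleftrightarrow> inj dn" by (simp add: inj_def)
    also have "\<dots> \<longleftrightarrow> (\<forall>h. dn h = 0 \<longrightarrow> h = 0)" using linear_injective_0[OF lin] .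
    also have "\<dots> \<longleftrightarrow> a*b \<noteq> 1 \<and> p*q \<noteq> 0" unfolding dn_def D0_def by (rule alg_inj)
    finally show ?thesis unfolding a_def b_def p_def q_def .
  qed
  show ?thesis using part1 part2 by blast
qed

end
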